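(* Assume Assumptions A, B, condition (P), and $c_1^2+c_2^2>0$. Then the maximal existence endpoint $R_{\max}$ of the solution $S$ of (IVP) equals $\infty$ (i.e. the solution exists on $[r_0,\infty)$) in each of the following cases: (1a) $c_2\le0<c_1$ and (C1); (1b) $c_1=0>c_2$ and (C4); (2a) $c_1\le0<c_2$ and (C3); (2b) $c_2=0>c_1$ and (C2); (3) $c_1,c_2>0$ and both (C1) and (C3); (4) $c_1,c_2<0$.
   Context: Fix an integer $n\ge2$. For $i=1,2$, $g_i(s)=a^{(i)}_0+a^{(i)}_1s^{\alpha^{(i)}_1}+\dots+a^{(i)}_{N_i}s^{\alpha^{(i)}_{N_i}}$ ($s\ge0$) with $N_i\ge0$, $a^{(i)}_0>0$, $a^{(i)}_j\ge0$, real $0<\alpha^{(i)}_1<\dots<\alpha^{(i)}_{N_i}$; $G_i(u)=g_i(|u|)u$ for $u\in\mathbb R$. Assumption A: $f_1,f_2\in C([0,1])\cap C^1((0,1))$, $f_1(0)=0$, $f_2(1)=0$, $f_1'>0$, $f_2'<0$ on $(0,1)$. Assumption B: $p_c'\in C^1((0,1))$, $p_c'>0$ on $(0,1)$. $F_i(S)=1/(p_c'(S)f_i(S))$. (IVP): $S'(r)=F(r,S(r))$ for $r>r_0$, $S(r_0)=s_0\in(0,1)$, $0<S(r)<1$, with $F(r,S)=G_2(c_2r^{1-n})F_2(S)-G_1(c_1r^{1-n})F_1(S)$; its unique solution on a maximal interval $[r_0,R_{\max})$ exists. Condition (P): $\lim_{S\to0^+}p_c'(S)f_1(S)=\lim_{S\to1^-}p_c'(S)f_2(S)=+\infty$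 (so $F_1(S)\to0$ as $S\to0^+$ and $F_2(S)\to0$ as $S\to1^-$). Conditions: (C1) $\limsup_{S\to0^+}F_1'(S)<\infty$; (C2) $\liminf_{S\to1^-}F_1'(S)>-\infty$; (C3) $\liminf_{S\to1^-}F_2'(S)>-\infty$; (C4) $\limsup_{S\to0^+}F_2'(S)<\infty$. *)

theory Defs
  imports "HOL-Analysis.Analysis" "HOL-Library.Liminf_Limsup"
begin

definition gfun :: "nat \<Rightarrow> (nat \<Rightarrow> real) \<Rightarrow> (nat \<Rightarrow> real) \<Rightarrow> real \<Rightarrow> real" where
  "gfun N a \<alpha> s = a 0 + (\<Sum>j=1..N. a j * s powr \<alpha> j)"

definition admissible_g :: "nat \<Rightarrow> (nat \<Rightarrow> real) \<Rightarrow> (nat \<Rightarrow> real) \<Rightarrow> bool" where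
  "admissible_g N a \<alpha> \<longleftrightarrow> a 0 > 0 \<and> (\<forall>j\<in>{1..N}. a j \<ge> 0)
     \<and> (\<forall>j\<in>{1..N}. 0 < \<alpha> j) \<and> (\<forall>i\<in>{1..N}. \<forall>j\<in>{1..N}. i < j \<longrightarrow> \<alpha> i < \<alpha> j)"

definition Gfun :: "nat \<Rightarrow> (nat \<Rightarrow> real) \<Rightarrow> (nat \<Rightarrow> real) \<Rightarrow> real \<Rightarrow> real" where
  "Gfun N a \<alpha> u = gfun N a \<alpha> \<bar>u\<bar> * u"

text \<open>F_i(S) = 1 / (p_c'(S) f_i(S)), with dpc standing for p_c'.\<close>
definition Fi :: "(real \<Rightarrow> real) \<Rightarrow> (real \<Rightarrow> real) \<Rightarrow> real \<Rightarrow> real" where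
  "Fi dpc f S = 1 / (dpc S * f S)"

definition Frhs :: "nat \<Rightarrow> real \<Rightarrow> real \<Rightarrow> (real \<Rightarrow> real) \<Rightarrow> (real \<Rightarrow> real)
     \<Rightarrow> (real \<Rightarrow> real) \<Rightarrow> (real \<Rightarrow> real) \<Rightarrow> (real \<Rightarrow> real) \<Rightarrow> real \<Rightarrow> real \<Rightarrow> real" where
  "Frhs n c1 c2 G1 G2 dpc f1 f2 r S =
     G2 (c2 * r powr (1 - real n)) * Fi dpc f2 S - G1 (c1 * r powr (1 - real n)) * Fi dpc f1 S"

end

theory Submission
  imports Defs
begin


lemma picard_interval:
  fixes f :: "real \<Rightarrow> real \<Rightarrow> real"
  assumes ab: "a \<le> b" and L: "L > 0"
    and cont: "\<And>y. continuous_on {a..b} y \<Longrightarrow> continuous_on {a..b} (\<lambda>t. f t (y t))"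
    and lip: "\<And>t x z. t \<in> {a..b} \<Longrightarrow> \<bar>f t x - f t z\<bar> \<le> L * \<bar>x - z\<bar>"
  shows "\<exists>y. continuous_on {a..b} y \<and> (\<forall>t\<in>{a..b}. y t = y0 + integral {a..t} (\<lambda>s. f s (y s)))
     \<and> (\<forall>z. continuous_on {a..b} z \<and> (\<forall>t\<in>{a..b}. z t = y0 + integral {a..t} (\<lambda>s. f s (z s)))
            \<longrightarrow> (\<forall>t\<in>{a..b}. z t = y t))"
proof -
  define cl where "cl t = max a (min b t)" for t :: real
  define e where "e x = exp (-2*L*(x - a))" for x :: real
  define w where "w t = e (cl t)" for t
  have cl_in: "cl t \<in> {a..b}" for t using ab by (auto simp: cl_def)
  have cl_id: "t \<in> {a..b} \<Longrightarrow> cl t = t" for t by (auto simp: cl_def)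
  have cl_cont: "continuous_on UNIV cl" unfolding cl_def by (intro continuous_intros)
  have e_pos: "e x > 0" for x by (simp add: e_def)
  have e_cont: "continuous_on S e" for S unfolding e_def by (intro continuous_intros)
  have w_pos: "w t > 0" for t by (simp add: w_def e_pos)
  have w_cont: "continuous_on UNIV w" unfolding w_def
    by (rule continuous_on_compose2[OF e_cont cl_cont]) auto
  define yv where "yv u t = apply_bcontfun u t / w t" for u :: "real \<Rightarrow>\<^sub>C real" and t
  have yv_cont: "continuous_on S (yv u)" for u S
    unfolding yv_def using w_pos by (intro continuous_intros continuous_on_subset[OF w_cont]) (auto simp: less_irrefl dual_order.strict_implies_not_eq)
  define I where "I y x = integral {a..x} (\<lambda>s. f s (y s))" for y :: "real \<Rightarrow> real" and x
  have I_cont: "continuous_on {a..b} (I y)" if "continuous_on {a..b} y" for y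
    unfolding I_def
    by (rule indefinite_integral_continuous_1, rule integrable_continuous_interval, rule cont[OF that])
  define P where "P y x = e x * (y0 + I y x)" for y x
  have P_cont: "continuous_on {a..b} (P y)" if "continuous_on {a..b} y" for y
    unfolding P_def by (intro continuous_intros e_cont I_cont that)
  have hcl_bc: "(\<lambda>t. h (cl t)) \<in> bcontfun" if "continuous_on {a..b} h" for h
  proof -
    have c: "continuous_on UNIV (\<lambda>t. h (cl t))"
      by (rule continuous_on_compose2[OF that cl_cont]) (use cl_in in auto)
    have "range (\<lambda>t. h (cl t)) \<subseteq> h ` {a..b}" using cl_in by auto
    moreover have "bounded (h ` {a..b})"
      by (intro compact_imp_bounded compact_continuous_image that compact_Icc)
    ultimately have "bounded (range (\<lambda>t. h (cl t)))" by (rule bounded_subset[rotated])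
    with c show ?thesis by (simp add: bcontfun_def)
  qed
  have Pcl_bc: "(\<lambda>t. P y (cl t)) \<in> bcontfun" if "continuous_on {a..b} y" for y
    by (rule hcl_bc[OF P_cont[OF that]])
  define \<Phi> where "\<Phi> u = Bcontfun (\<lambda>t. P (yv u) (cl t))" for u
  have \<Phi>_app: "apply_bcontfun (\<Phi> u) t = P (yv u) (cl t)" for u t
    unfolding \<Phi>_def using Pcl_bc[OF yv_cont] by (simp add: Bcontfun_inverse)
  have yv_cl: "yv u s = apply_bcontfun u s * exp (2*L*(s-a))" if "s \<in> {a..b}" for u s
  proof -
    have "w s = exp (-(2*L*(s-a)))" using that by (simp add: w_def e_def cl_id)
    then show ?thesis by (simp add: yv_def exp_minus divide_inverse)
  qed
  have contr: "dist (\<Phi> u) (\<Phi> v) \<le> (1/2) * dist u v" for u v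
  proof (rule dist_bound)
    fix t
    define D where "D = dist u v"
    define x where "x = cl t"
    have x: "x \<in> {a..b}" using cl_in x_def by auto
    have sub: "{a..x} \<subseteq> {a..b}" using x by auto
    have int1: "(\<lambda>s. f s (yv u s)) integrable_on {a..x}" for u
      by (rule integrable_continuous_interval, rule continuous_on_subset[OF cont[OF yv_cont] sub])
    have gcont: "continuous_on S (\<lambda>s. L * D * exp (2*L*(s-a)))" for S
      by (intro continuous_intros)
    have int2: "(\<lambda>s. L * D * exp (2*L*(s-a))) integrable_on {a..x}"
      by (rule integrable_continuous_interval, rule gcont)
    have diffI: "I (yv u) x - I (yv v) x = integral {a..x} (\<lambda>s. f s (yv u s) - f s (yv v s))"
      unfolding I_def by (rule integral_diff[symmetric]) (rule int1)+
    have bnd: "norm (f s (yv u s) - f s (yv v s)) \<le> L * D * exp (2*L*(s-a))" if "s \<in> {a..x}" for s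
    proof -
      have s: "s \<in> {a..b}" using that sub by auto
      have "norm (f s (yv u s) - f s (yv v s)) \<le> L * \<bar>yv u s - yv v s\<bar>"
        using lip[OF s] by simp
      also have "\<bar>yv u s - yv v s\<bar> = \<bar>apply_bcontfun u s - apply_bcontfun v s\<bar> * exp (2*L*(s-a))"
        using yv_cl[OF s] by (simp add: left_diff_distrib[symmetric] abs_mult)
      also have "\<bar>apply_bcontfun u s - apply_bcontfun v s\<bar> \<le> D"
        using dist_bounded[of u s v] by (simp add: D_def dist_real_def)
      finally show ?thesis using L by (simp add: mult_right_mono mult_left_mono)
    qed
    have "norm (I (yv u) x - I (yv v) x) \<le> integral {a..x} (\<lambda>s. L * D * exp (2*L*(s-a)))"
      unfolding diffI
      by (rule integral_norm_bound_integral) (use int1 int2 bnd in \<open>auto intro: integrable_diff\<close>)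
    also have "integral {a..x} (\<lambda>s. L * D * exp (2*L*(s-a))) = D/2 * exp (2*L*(x-a)) - D/2"
    proof -
      have "((\<lambda>s. L * D * exp (2*L*(s-a))) has_integral (D/2 * exp (2*L*(x-a)) - D/2 * exp (2*L*(a-a)))) {a..x}"
      proof (rule fundamental_theorem_of_calculus)
        show "a \<le> x" using x by auto
        fix s assume "s \<in> {a..x}"
        show "((\<lambda>s. D/2 * exp (2*L*(s-a))) has_vector_derivative L * D * exp (2*L*(s-a))) (at s within {a..x})"
          unfolding has_real_derivative_iff_has_vector_derivative[symmetric] using L
          by (auto intro!: derivative_eq_intros)
      qed
      then have "((\<lambda>s. L * D * exp (2*L*(s-a))) has_integral (D/2 * exp (2*L*(x-a)) - D/2)) {a..x}" by simp
      then show ?thesis by (rule integral_unique)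
    qed
    finally have n: "\<bar>I (yv u) x - I (yv v) x\<bar> \<le> D/2 * exp (2*L*(x-a)) - D/2" by simp
    have "dist (apply_bcontfun (\<Phi> u) t) (apply_bcontfun (\<Phi> v) t) = e x * \<bar>I (yv u) x - I (yv v) x\<bar>"
      unfolding \<Phi>_app P_def x_def[symmetric] dist_real_def using e_pos[of x]
      by (simp add: right_diff_distrib[symmetric] abs_mult)
    also have "\<dots> \<le> e x * (D/2 * exp (2*L*(x-a)) - D/2)"
      using n e_pos[of x] by (simp add: mult_left_mono)
    also have "\<dots> = D/2 * (e x * exp (2*L*(x-a))) - D/2 * e x"
      by (simp add: algebra_simps)
    also have "e x * exp (2*L*(x-a)) = 1"
      by (simp add: e_def flip: exp_add)
    also have "D/2 * 1 - D/2 * e x \<le> D/2" using e_pos[of x] zero_le_dist[of u v]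
      unfolding D_def by (simp add: mult_nonneg_nonneg)
    finally show "dist (apply_bcontfun (\<Phi> u) t) (apply_bcontfun (\<Phi> v) t) \<le> 1/2 * dist u v"
      by (simp add: D_def)
  qed
  obtain u where u: "\<Phi> u = u" and uu: "\<And>v. \<Phi> v = v \<Longrightarrow> v = u"
  proof -
    have "\<exists>!x. \<Phi> x = x" by (rule banach_fix_type[of "1/2"]) (use contr in simp_all)
    then show ?thesis using that by metis
  qed
  have eqn: "yv u t = y0 + I (yv u) t" if t: "t \<in> {a..b}" for t
  proof -
    have "apply_bcontfun u t = e t * (y0 + I (yv u) t)"
      using \<Phi>_app[of u t] u by (simp add: P_def cl_id[OF t])
    moreover have "w t = e t" by (simp add: w_def cl_id[OF t])
    ultimately show ?thesis using e_pos[of t] by (simp add: yv_def)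
  qed
  show ?thesis
  proof (intro exI conjI allI impI ballI)
    show "continuous_on {a..b} (yv u)" by (rule yv_cont)
    show "yv u t = y0 + integral {a..t} (\<lambda>s. f s (yv u s))" if "t \<in> {a..b}" for t
      using eqn[OF that] by (simp add: I_def)
    fix z t
    assume z: "continuous_on {a..b} z \<and> (\<forall>t\<in>{a..b}. z t = y0 + integral {a..t} (\<lambda>s. f s (z s)))"
      and t: "t \<in> {a..b}"
    have zc: "continuous_on {a..b} (\<lambda>x. e x * z x)" using z by (intro continuous_intros e_cont) auto
    define v where "v = Bcontfun (\<lambda>t. e (cl t) * z (cl t))"
    have v_app: "apply_bcontfun v s = e (cl s) * z (cl s)" for s
      unfolding v_def using hcl_bc[OF zc] by (simp add: Bcontfun_inverse)
    have yvv: "yv v s = z s" if "s \<in> {a..b}" for s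
      using e_pos[of s] by (simp add: yv_def v_app w_def cl_id[OF that])
    have "\<Phi> v = v"
    proof (rule bcontfun_eqI)
      fix s
      have sx: "{a..cl s} \<subseteq> {a..b}" using cl_in[of s] by auto
      have "I (yv v) (cl s) = I z (cl s)" unfolding I_def
        by (rule integral_cong) (use yvv sx in auto)
      then show "apply_bcontfun (\<Phi> v) s = apply_bcontfun v s"
        using z cl_in[of s] by (simp add: \<Phi>_app v_app P_def I_def)
    qed
    then have "v = u" by (rule uu)
    then show "z t = yv u t" using yvv[OF t] by simp
  qed
qed
lemma picard_global:
  fixes f :: "real \<Rightarrow> real \<Rightarrow> real"
  assumes cont: "\<And>b y. continuous_on {a..b} y \<Longrightarrow> continuous_on {a..b} (\<lambda>t. f t (y t))"
    and lip: "\<And>b. \<exists>L>0. \<forall>t\<in>{a..b}. \<forall>x z. \<bar>f t x - f t z\<bar> \<le> L * \<bar>x - z\<bar>"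
  shows "\<exists>y. y a = y0 \<and> continuous_on {a..} y \<and> (\<forall>t>a. (y has_real_derivative f t (y t)) (at t))"
proof -
  have "\<forall>k::nat. \<exists>y. continuous_on {a..a+real k} y \<and> (\<forall>t\<in>{a..a+real k}. y t = y0 + integral {a..t} (\<lambda>s. f s (y s)))
     \<and> (\<forall>z. continuous_on {a..a+real k} z \<and> (\<forall>t\<in>{a..a+real k}. z t = y0 + integral {a..t} (\<lambda>s. f s (z s)))
            \<longrightarrow> (\<forall>t\<in>{a..a+real k}. z t = y t))"
  proof
    fix k :: nat
    obtain L where L: "L > 0" "\<forall>t\<in>{a..a+real k}. \<forall>x z. \<bar>f t x - f t z\<bar> \<le> L * \<bar>x - z\<bar>"
      using lip by blast
    show "\<exists>y. continuous_on {a..a+real k} y \<and> (\<forall>t\<in>{a..a+real k}. y t = y0 + integral {a..t} (\<lambda>s. f s (y s)))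
     \<and> (\<forall>z. continuous_on {a..a+real k} z \<and> (\<forall>t\<in>{a..a+real k}. z t = y0 + integral {a..t} (\<lambda>s. f s (z s)))
            \<longrightarrow> (\<forall>t\<in>{a..a+real k}. z t = y t))"
      by (rule picard_interval[OF _ L(1) cont]) (use L(2) in auto)
  qed
  from choice[OF this] obtain Y where Y: "\<forall>k::nat. continuous_on {a..a+real k} (Y k) \<and> (\<forall>t\<in>{a..a+real k}. Y k t = y0 + integral {a..t} (\<lambda>s. f s (Y k s)))
     \<and> (\<forall>z. continuous_on {a..a+real k} z \<and> (\<forall>t\<in>{a..a+real k}. z t = y0 + integral {a..t} (\<lambda>s. f s (z s)))
            \<longrightarrow> (\<forall>t\<in>{a..a+real k}. z t = Y k t))" by blast
  have Yc: "\<And>k. continuous_on {a..a+real k} (Y k)" using Y by blast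
  have Ye: "\<And>k t. t \<in> {a..a+real k} \<Longrightarrow> Y k t = y0 + integral {a..t} (\<lambda>s. f s (Y k s))"
    using Y by blast
  have Yu: "\<And>k z. continuous_on {a..a+real k} z \<Longrightarrow> (\<forall>t\<in>{a..a+real k}. z t = y0 + integral {a..t} (\<lambda>s. f s (z s)))
            \<Longrightarrow> (\<forall>t\<in>{a..a+real k}. z t = Y k t)"
    using Y by blast
  have cons: "Y k' t = Y k t" if "k \<le> k'" "t \<in> {a..a+real k}" for k k' t
  proof -
    have sub: "{a..a+real k} \<subseteq> {a..a+real k'}" using that by auto
    show ?thesis
      by (rule Yu[rule_format, OF continuous_on_subset[OF Yc sub] _ that(2)]) (use Ye sub in blast)
  qed
  define y where "y t = Y (nat \<lceil>t - a\<rceil> + 1) t" for t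
  have yY: "y t = Y k t" if "t \<in> {a..a+real k}" for k t
  proof -
    define m where "m = nat \<lceil>t - a\<rceil> + 1"
    have tm: "t \<in> {a..a+real m}" using that unfolding m_def by auto (linarith)
    have "Y m t = Y (max m k) t" by (rule cons[symmetric]) (use tm in auto)
    also have "\<dots> = Y k t" by (rule cons) (use that in auto)
    finally show ?thesis by (simp add: y_def m_def)
  qed
  have der: "(y has_real_derivative f t (y t)) (at t)" if t: "t > a" for t
  proof -
    define k where "k = nat \<lceil>t - a\<rceil> + 1"
    have tk: "t < a + real k" unfolding k_def by linarith
    have g: "continuous_on {a..a+real k} (\<lambda>s. f s (Y k s))" by (rule cont[OF Yc])
    have "((\<lambda>s. y0 + integral {a..s} (\<lambda>s. f s (Y k s))) has_real_derivative f t (Y k t)) (at t within {a..a+real k})"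
    proof -
      have i: "((\<lambda>s. integral {a..s} (\<lambda>s. f s (Y k s))) has_real_derivative f t (Y k t)) (at t within {a..a+real k})"
        by (rule integral_has_real_derivative[OF g]) (use t tk in auto)
      show ?thesis using DERIV_add[OF DERIV_const[of y0] i] by simp
    qed
    then have "((\<lambda>s. y0 + integral {a..s} (\<lambda>s. f s (Y k s))) has_real_derivative f t (Y k t)) (at t within {a<..<a+real k})"
      by (rule has_field_derivative_subset) auto
    then have d: "((\<lambda>s. y0 + integral {a..s} (\<lambda>s. f s (Y k s))) has_real_derivative f t (Y k t)) (at t)"
      using at_within_open[of t "{a<..<a+real k}"] t tk by auto
    have "(y has_real_derivative f t (Y k t)) (at t)"
      by (rule has_field_derivative_transform_within_open[OF d, of "{a<..<a+real k}"])
        (use t tk in auto, metis Ye[of _ k] yY[of _ k] atLeastAtMost_iff less_imp_le)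
    then show ?thesis using yY[of t k] t tk by simp
  qed
  have c1: "continuous_on {a..a+1} y"
  proof -
    have "continuous_on {a..a+1} (Y 1)" using Yc[of 1] by simp
    then show ?thesis by (rule continuous_on_eq) (use yY[of _ 1] in auto)
  qed
  have c2: "continuous_on {a+1..} y"
    by (rule continuous_at_imp_continuous_on) (use der DERIV_isCont in force)
  have "continuous_on ({a..a+1} \<union> {a+1..}) y"
    by (rule continuous_on_closed_Un[OF _ _ c1 c2]) auto
  moreover have "{a..a+1} \<union> {a+1..} = {a..}" by auto
  moreover have "y a = y0" using yY[of a 0] Ye[of a 0] by simp
  ultimately show ?thesis using der by auto
qed


lemma clamp_lip: "\<bar>max d (min u x) - max d (min u z)\<bar> \<le> \<bar>x - z\<bar>" for d u x z :: real
  by (auto simp: max_def min_def abs_if)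

lemma abstract_main:
  fixes A B Fa Fb :: "real \<Rightarrow> real" and r0 s0 C sl eu KA KB :: real
  assumes Acont: "continuous_on {r0..} A" and Bcont: "continuous_on {r0..} B"
    and Abnd: "\<And>r. r \<ge> r0 \<Longrightarrow> \<bar>A r\<bar> \<le> KA" and Bbnd: "\<And>r. r \<ge> r0 \<Longrightarrow> \<bar>B r\<bar> \<le> KB"
    and F1cont: "continuous_on {0<..<1} Fa" and F2cont: "continuous_on {0<..<1} Fb"
    and F1lip: "\<And>p q. 0 < p \<Longrightarrow> q < 1 \<Longrightarrow> \<exists>L. \<forall>x\<in>{p..q}. \<forall>z\<in>{p..q}. \<bar>Fa x - Fa z\<bar> \<le> L * \<bar>x - z\<bar>"
    and F2lip: "\<And>p q. 0 < p \<Longrightarrow> q < 1 \<Longrightarrow> \<exists>L. \<forall>x\<in>{p..q}. \<forall>z\<in>{p..q}. \<bar>Fb x - Fb z\<bar> \<le> L * \<bar>x - z\<bar>"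
    and s0: "0 < s0" "s0 < 1"
    and C: "C > 0" and sl: "0 < sl" and eu: "0 < eu"
    and low: "\<And>r S. r \<ge> r0 \<Longrightarrow> 0 < S \<Longrightarrow> S \<le> sl \<Longrightarrow> A r * Fb S - B r * Fa S \<ge> -C*S"
    and up: "\<And>r S. r \<ge> r0 \<Longrightarrow> 1 - eu \<le> S \<Longrightarrow> S < 1 \<Longrightarrow> A r * Fb S - B r * Fa S \<le> C*(1-S)"
  shows "\<exists>S. S r0 = s0 \<and> continuous_on {r0..} S \<and> (\<forall>r\<ge>r0. 0 < S r \<and> S r < 1)
     \<and> (\<forall>r>r0. (S has_real_derivative A r * Fb (S r) - B r * Fa (S r)) (at r))"
proof -
  define d0 where "d0 = min sl (min (s0/2) (1/4))"
  define e0 where "e0 = min eu (min ((1-s0)/2) (1/4))"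
  define \<delta> where "\<delta> r = d0 * exp (-2*C*(r-r0))" for r
  define \<epsilon> where "\<epsilon> r = e0 * exp (-2*C*(r-r0))" for r
  have d0: "0 < d0" "d0 \<le> sl" "d0 < s0" "d0 \<le> 1/4" using s0 sl unfolding d0_def by (auto simp: min_def)
  have e0: "0 < e0" "e0 \<le> eu" "e0 < 1 - s0" "e0 \<le> 1/4" using s0 eu unfolding e0_def by (auto simp: min_def)
  have exple: "exp (-2*C*(r-r0)) \<le> 1" if "r \<ge> r0" for r using that C by simp
  have \<delta>pos: "\<delta> r > 0" for r using d0 by (simp add: \<delta>_def)
  have \<epsilon>pos: "\<epsilon> r > 0" for r using e0 by (simp add: \<epsilon>_def)
  have \<delta>le: "\<delta> r \<le> d0" if "r \<ge> r0" for r
    using exple[OF that] d0 by (simp add: \<delta>_def mult_left_le)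
  have \<epsilon>le: "\<epsilon> r \<le> e0" if "r \<ge> r0" for r
    using exple[OF that] e0 by (simp add: \<epsilon>_def mult_left_le)
  have \<delta>mono: "\<delta> b \<le> \<delta> t" if "t \<le> b" for t b
    using that C d0 by (simp add: \<delta>_def)
  have \<epsilon>mono: "\<epsilon> b \<le> \<epsilon> t" if "t \<le> b" for t b
    using that C e0 by (simp add: \<epsilon>_def)
  have \<delta>der: "(\<delta> has_real_derivative -2*C*\<delta> t) (at t)" for t
    unfolding \<delta>_def by (auto intro!: derivative_eq_intros)
  have \<epsilon>der: "(\<epsilon> has_real_derivative -2*C*\<epsilon> t) (at t)" for t
    unfolding \<epsilon>_def by (auto intro!: derivative_eq_intros)
  define cl where "cl r S = max (\<delta> r) (min (1 - \<epsilon> r) S)" for r S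
  define f where "f r S = A r * Fb (cl r S) - B r * Fa (cl r S)" for r S
  have cl_in: "cl r S \<in> {\<delta> r..1 - \<epsilon> r}" if "r \<ge> r0" for r S
    using \<delta>le[OF that] \<epsilon>le[OF that] d0 e0 by (auto simp: cl_def)
  have cont: "continuous_on {r0..b} (\<lambda>t. f t (y t))" if y: "continuous_on {r0..b} y" for b y
  proof -
    have clc: "continuous_on {r0..b} (\<lambda>t. cl t (y t))"
      unfolding cl_def \<delta>_def \<epsilon>_def by (intro continuous_intros y)
    have clin: "cl t (y t) \<in> {0<..<1}" if "t \<in> {r0..b}" for t
      using cl_in[of t "y t"] that \<delta>pos[of t] \<epsilon>pos[of t] by auto
    have c1: "continuous_on {r0..b} (\<lambda>t. Fa (cl t (y t)))"
      by (rule continuous_on_compose2[OF F1cont clc]) (use clin in auto)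
    have c2: "continuous_on {r0..b} (\<lambda>t. Fb (cl t (y t)))"
      by (rule continuous_on_compose2[OF F2cont clc]) (use clin in auto)
    have "continuous_on {r0..b} A" "continuous_on {r0..b} B"
      by (auto intro: continuous_on_subset[OF Acont] continuous_on_subset[OF Bcont])
    then show ?thesis unfolding f_def by (intro continuous_intros c1 c2)
  qed
  have lip: "\<exists>L>0. \<forall>t\<in>{r0..b}. \<forall>x z. \<bar>f t x - f t z\<bar> \<le> L * \<bar>x - z\<bar>" for b
  proof -
    define p where "p = \<delta> (max b r0)"
    define q where "q = 1 - \<epsilon> (max b r0)"
    have pq: "0 < p" "q < 1" using \<delta>pos \<epsilon>pos by (auto simp: p_def q_def)
    obtain L1 where L1: "\<forall>x\<in>{p..q}. \<forall>z\<in>{p..q}. \<bar>Fa x - Fa z\<bar> \<le> L1 * \<bar>x - z\<bar>" using F1lip[OF pq] by blast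
    obtain L2 where L2: "\<forall>x\<in>{p..q}. \<forall>z\<in>{p..q}. \<bar>Fb x - Fb z\<bar> \<le> L2 * \<bar>x - z\<bar>" using F2lip[OF pq] by blast
    have KA: "KA \<ge> 0" using Abnd[of r0] by simp
    have KB: "KB \<ge> 0" using Bbnd[of r0] by simp
    define L where "L = KA * max L2 0 + KB * max L1 0 + 1"
    have Lpos: "L > 0" using KA KB unfolding L_def by (simp add: add_nonneg_pos)
    have "\<bar>f t x - f t z\<bar> \<le> L * \<bar>x - z\<bar>" if t: "t \<in> {r0..b}" for t x z
    proof -
      have clpq: "cl t w \<in> {p..q}" for w
        using cl_in[of t w] t \<delta>mono[of t "max b r0"] \<epsilon>mono[of t "max b r0"] by (auto simp: p_def q_def)
      have cld: "\<bar>cl t x - cl t z\<bar> \<le> \<bar>x - z\<bar>" unfolding cl_def by (rule clamp_lip)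
      have e1: "\<bar>Fa (cl t x) - Fa (cl t z)\<bar> \<le> max L1 0 * \<bar>x - z\<bar>"
      proof -
        have "\<bar>Fa (cl t x) - Fa (cl t z)\<bar> \<le> L1 * \<bar>cl t x - cl t z\<bar>" using L1 clpq by blast
        also have "\<dots> \<le> max L1 0 * \<bar>cl t x - cl t z\<bar>" by (simp add: mult_right_mono)
        also have "\<dots> \<le> max L1 0 * \<bar>x - z\<bar>" using cld by (simp add: mult_left_mono)
        finally show ?thesis .
      qed
      have e2: "\<bar>Fb (cl t x) - Fb (cl t z)\<bar> \<le> max L2 0 * \<bar>x - z\<bar>"
      proof -
        have "\<bar>Fb (cl t x) - Fb (cl t z)\<bar> \<le> L2 * \<bar>cl t x - cl t z\<bar>" using L2 clpq by blast
        also have "\<dots> \<le> max L2 0 * \<bar>cl t x - cl t z\<bar>" by (simp add: mult_right_mono)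
        also have "\<dots> \<le> max L2 0 * \<bar>x - z\<bar>" using cld by (simp add: mult_left_mono)
        finally show ?thesis .
      qed
      have "f t x - f t z = A t * (Fb (cl t x) - Fb (cl t z)) - B t * (Fa (cl t x) - Fa (cl t z))"
        by (simp add: f_def algebra_simps)
      then have "\<bar>f t x - f t z\<bar> \<le> \<bar>A t\<bar> * \<bar>Fb (cl t x) - Fb (cl t z)\<bar> + \<bar>B t\<bar> * \<bar>Fa (cl t x) - Fa (cl t z)\<bar>"
        by (simp add: abs_mult[symmetric] abs_triangle_ineq4)
      also have "\<dots> \<le> KA * (max L2 0 * \<bar>x - z\<bar>) + KB * (max L1 0 * \<bar>x - z\<bar>)"
        by (intro add_mono mult_mono e1 e2 Abnd Bbnd) (use t KA KB in auto)
      also have "\<dots> \<le> L * \<bar>x - z\<bar>" by (simp add: L_def algebra_simps)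
      finally show ?thesis .
    qed
    then show ?thesis using Lpos by blast
  qed
  obtain y where y0: "y r0 = s0" and yc: "continuous_on {r0..} y"
    and yd: "\<And>t. t > r0 \<Longrightarrow> (y has_real_derivative f t (y t)) (at t)"
    using picard_global[of r0 f s0, OF cont lip] by blast
  have gc: "continuous_on {r0..} (\<lambda>t. y t - \<delta> t)" "continuous_on {r0..} (\<lambda>t. y t - (1 - \<epsilon> t))"
    unfolding \<delta>_def \<epsilon>_def by (intro continuous_intros yc)+
  have lowb: "\<delta> t < y t" if "t \<ge> r0" for t
  proof (rule ccontr)
    assume "\<not> \<delta> t < y t"
    define K where "K = {r0..} \<inter> (\<lambda>t. y t - \<delta> t) -` {..0}"
    have Kc: "closed K" unfolding K_def by (rule continuous_closed_preimage[OF gc(1)]) auto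
    have tK: "t \<in> K" using that \<open>\<not> \<delta> t < y t\<close> by (auto simp: K_def)
    have Kb: "bdd_below K" unfolding K_def by (rule bdd_belowI[of _ r0]) auto
    define T where "T = Inf K"
    have TK: "T \<in> K" unfolding T_def by (rule closed_contains_Inf) (use tK Kb Kc in auto)
    have Tmin: "T \<le> x" if "x \<in> K" for x unfolding T_def by (rule cInf_lower[OF that Kb])
    have T0: "T \<ge> r0" "y T \<le> \<delta> T" using TK by (auto simp: K_def)
    have Tne: "T \<noteq> r0" using T0 y0 \<delta>le[of r0] d0 by auto
    have Tgt: "T > r0" using T0 Tne by auto
    have before: "y x > \<delta> x" if "r0 \<le> x" "x < T" for x
      using Tmin[of x] that by (force simp: K_def)
    have clT: "cl T (y T) = \<delta> T"
      using T0 \<delta>le[of T] \<epsilon>le[of T] d0 e0 by (auto simp: cl_def)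
    have fT: "f T (y T) \<ge> -C * \<delta> T"
      unfolding f_def clT using low[of T "\<delta> T"] T0 \<delta>pos[of T] \<delta>le[of T] d0 by auto
    have dg: "((\<lambda>t. y t - \<delta> t) has_real_derivative f T (y T) - (-2*C*\<delta> T)) (at T)"
      by (intro DERIV_diff yd Tgt \<delta>der)
    have pos: "f T (y T) - (-2*C*\<delta> T) > 0" using fT mult_pos_pos[OF C \<delta>pos[of T]] by linarith
    obtain d where d: "d > 0" "\<And>h. h > 0 \<Longrightarrow> h < d \<Longrightarrow> y (T-h) - \<delta> (T-h) < y T - \<delta> T"
      using DERIV_pos_inc_left[OF dg pos] by blast
    define m where "m = min d (T - r0)"
    have m: "m \<le> T - r0" "m \<le> d" "m > 0" using d Tgt by (auto simp: m_def)
    define h where "h = m / 2"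
    have h: "h > 0" "h < d" "T - h \<ge> r0" "T - h < T" using m by (auto simp: h_def)
    show False using d(2)[OF h(1,2)] before[OF h(3,4)] T0 by linarith
  qed
  have upb: "y t < 1 - \<epsilon> t" if "t \<ge> r0" for t
  proof (rule ccontr)
    assume "\<not> y t < 1 - \<epsilon> t"
    define K where "K = {r0..} \<inter> (\<lambda>t. y t - (1 - \<epsilon> t)) -` {0..}"
    have Kc: "closed K" unfolding K_def by (rule continuous_closed_preimage[OF gc(2)]) auto
    have tK: "t \<in> K" using that \<open>\<not> y t < 1 - \<epsilon> t\<close> by (auto simp: K_def)
    have Kb: "bdd_below K" unfolding K_def by (rule bdd_belowI[of _ r0]) auto
    define T where "T = Inf K"
    have TK: "T \<in> K" unfolding T_def by (rule closed_contains_Inf) (use tK Kb Kc in auto)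
    have Tmin: "T \<le> x" if "x \<in> K" for x unfolding T_def by (rule cInf_lower[OF that Kb])
    have T0: "T \<ge> r0" "y T \<ge> 1 - \<epsilon> T" using TK by (auto simp: K_def)
    have Tne: "T \<noteq> r0" using T0 y0 \<epsilon>le[of r0] e0 by auto
    have Tgt: "T > r0" using T0 Tne by auto
    have before: "y x < 1 - \<epsilon> x" if "r0 \<le> x" "x < T" for x
      using Tmin[of x] that by (force simp: K_def)
    have clT: "cl T (y T) = 1 - \<epsilon> T"
      using T0 \<delta>le[of T] \<epsilon>le[of T] d0 e0 by (auto simp: cl_def)
    have fT: "f T (y T) \<le> C * \<epsilon> T"
      unfolding f_def clT using up[of T "1 - \<epsilon> T"] T0 \<epsilon>pos[of T] \<epsilon>le[of T] e0 by auto
    have dg: "((\<lambda>t. y t - (1 - \<epsilon> t)) has_real_derivative f T (y T) - (0 - (-2*C*\<epsilon> T))) (at T)"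
      by (intro DERIV_diff yd Tgt \<epsilon>der DERIV_const)
    have neg: "f T (y T) - (0 - (-2*C*\<epsilon> T)) < 0" using fT mult_pos_pos[OF C \<epsilon>pos[of T]] by linarith
    obtain d where d: "d > 0" "\<And>h. h > 0 \<Longrightarrow> h < d \<Longrightarrow> y T - (1 - \<epsilon> T) < y (T-h) - (1 - \<epsilon> (T-h))"
      using DERIV_neg_dec_left[OF dg neg] by blast
    define m where "m = min d (T - r0)"
    have m: "m \<le> T - r0" "m \<le> d" "m > 0" using d Tgt by (auto simp: m_def)
    define h where "h = m / 2"
    have h: "h > 0" "h < d" "T - h \<ge> r0" "T - h < T" using m by (auto simp: h_def)
    show False using d(2)[OF h(1,2)] before[OF h(3,4)] T0 by linarith
  qed
  have clid: "cl t (y t) = y t" if "t \<ge> r0" for t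
    using lowb[OF that] upb[OF that] by (auto simp: cl_def)
  show ?thesis
  proof (intro exI conjI allI impI)
    show "y r0 = s0" by (rule y0)
    show "continuous_on {r0..} y" by (rule yc)
    fix r
    show "r \<ge> r0 \<Longrightarrow> 0 < y r" using lowb \<delta>pos[of r] by (meson less_trans)
    show "r \<ge> r0 \<Longrightarrow> y r < 1" using upb \<epsilon>pos[of r] by (smt (verit))
    show "r > r0 \<Longrightarrow> (y has_real_derivative A r * Fb (y r) - B r * Fa (y r)) (at r)"
      using yd[of r] clid[of r] by (simp add: f_def)
  qed
qed


lemma gfun_ge:
  assumes "admissible_g N a \<alpha>" "s \<ge> 0"
  shows "gfun N a \<alpha> s \<ge> a 0"
proof -
  have "(\<Sum>j=1..N. a j * s powr \<alpha> j) \<ge> 0"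
    using assms by (intro sum_nonneg) (auto simp: admissible_g_def)
  then show ?thesis by (simp add: gfun_def)
qed

lemma gfun_mono:
  assumes "admissible_g N a \<alpha>" "0 \<le> s" "s \<le> t"
  shows "gfun N a \<alpha> s \<le> gfun N a \<alpha> t"
proof -
  have h: "\<forall>j\<in>{1..N}. 0 \<le> \<alpha> j \<and> 0 \<le> a j" using assms(1)
    by (simp add: admissible_g_def) (meson less_imp_le)
  have "(\<Sum>j=1..N. a j * s powr \<alpha> j) \<le> (\<Sum>j=1..N. a j * t powr \<alpha> j)"
    using assms h by (intro sum_mono mult_left_mono powr_mono2) auto
  then show ?thesis by (simp add: gfun_def)
qed

lemma gfun_cont:
  assumes "continuous_on S h" "\<forall>x\<in>S. h x \<noteq> 0"
  shows "continuous_on S (\<lambda>x. gfun N a \<alpha> (h x))"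
  unfolding gfun_def using assms by (intro continuous_intros) auto

lemma Aprops:
  fixes c r0 :: real and n :: nat
  assumes adm: "admissible_g N a \<alpha>" and r0: "r0 > 0" and n: "n \<ge> 2"
  defines "A \<equiv> \<lambda>r. Gfun N a \<alpha> (c * r powr (1 - real n))"
  shows "continuous_on {r0..} A"
    and "\<exists>K\<ge>0. \<forall>r\<ge>r0. a 0 * \<bar>c\<bar> * r powr (1 - real n) \<le> \<bar>A r\<bar> \<and> \<bar>A r\<bar> \<le> K * \<bar>c\<bar> * r powr (1 - real n)"
    and "\<exists>K. \<forall>r\<ge>r0. \<bar>A r\<bar> \<le> K"
    and "r > 0 \<Longrightarrow> c > 0 \<Longrightarrow> A r > 0"
    and "r > 0 \<Longrightarrow> c < 0 \<Longrightarrow> A r < 0"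
    and "c = 0 \<Longrightarrow> A r = 0"
proof -
  have a0: "a 0 > 0" using adm by (simp add: admissible_g_def)
  have Aeq: "A r = gfun N a \<alpha> (\<bar>c\<bar> * r powr (1 - real n)) * (c * r powr (1 - real n))" if "r > 0" for r
    using that by (simp add: A_def Gfun_def abs_mult)
  have gpos: "gfun N a \<alpha> s > 0" if "s \<ge> 0" for s using gfun_ge[OF adm that] a0 by simp
  show "continuous_on {r0..} A"
  proof (cases "c = 0")
    case True
    then have "A = (\<lambda>_. 0)" by (auto simp: A_def Gfun_def)
    then show ?thesis by simp
  next
    case False
    have "continuous_on {r0..} (\<lambda>r. gfun N a \<alpha> \<bar>c * r powr (1 - real n)\<bar> * (c * r powr (1 - real n)))"
      using r0 False by (intro continuous_intros gfun_cont) auto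
    then show ?thesis by (simp add: A_def Gfun_def)
  qed
  define P0 where "P0 = r0 powr (1 - real n)"
  define K where "K = gfun N a \<alpha> (\<bar>c\<bar> * P0)"
  have K0: "K \<ge> 0" using gpos[of "\<bar>c\<bar> * P0"] by (simp add: K_def P0_def)
  have pb: "r powr (1 - real n) \<le> P0" if "r \<ge> r0" for r
    unfolding P0_def by (rule powr_mono2') (use n r0 that in auto)
  have AB: "a 0 * \<bar>c\<bar> * r powr (1 - real n) \<le> \<bar>A r\<bar> \<and> \<bar>A r\<bar> \<le> K * \<bar>c\<bar> * r powr (1 - real n)" if r: "r \<ge> r0" for r
  proof -
    have rp: "r > 0" using r r0 by simp
    have p: "r powr (1 - real n) > 0" using rp by simp
    have absA: "\<bar>A r\<bar> = gfun N a \<alpha> (\<bar>c\<bar> * r powr (1 - real n)) * (\<bar>c\<bar> * r powr (1 - real n))"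
      using Aeq[OF rp] gpos[of "\<bar>c\<bar> * r powr (1 - real n)"] p by (simp add: abs_mult)
    have g1: "a 0 \<le> gfun N a \<alpha> (\<bar>c\<bar> * r powr (1 - real n))" by (rule gfun_ge[OF adm]) (use p in simp)
    have g2: "gfun N a \<alpha> (\<bar>c\<bar> * r powr (1 - real n)) \<le> K"
      unfolding K_def by (rule gfun_mono[OF adm]) (use p pb[OF r] in \<open>auto intro: mult_left_mono\<close>)
    have cp: "\<bar>c\<bar> * r powr (1 - real n) \<ge> 0" using p by simp
    show ?thesis unfolding absA using mult_right_mono[OF g1 cp] mult_right_mono[OF g2 cp]
      by (simp add: mult.assoc)
  qed
  then show "\<exists>K\<ge>0. \<forall>r\<ge>r0. a 0 * \<bar>c\<bar> * r powr (1 - real n) \<le> \<bar>A r\<bar> \<and> \<bar>A r\<bar> \<le> K * \<bar>c\<bar> * r powr (1 - real n)"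
    using K0 by blast
  show "\<exists>K. \<forall>r\<ge>r0. \<bar>A r\<bar> \<le> K"
  proof (intro exI allI impI)
    fix r assume r: "r \<ge> r0"
    have "K * \<bar>c\<bar> * r powr (1 - real n) \<le> K * \<bar>c\<bar> * P0"
      using pb[OF r] K0 by (intro mult_left_mono) auto
    then show "\<bar>A r\<bar> \<le> K * \<bar>c\<bar> * P0" using AB[OF r] by linarith
  qed
  show "r > 0 \<Longrightarrow> c > 0 \<Longrightarrow> A r > 0"
    using Aeq[of r] gpos[of "\<bar>c\<bar> * r powr (1 - real n)"] by (simp add: mult_pos_pos)
  show "r > 0 \<Longrightarrow> c < 0 \<Longrightarrow> A r < 0"
  proof -
    assume "r > 0" "c < 0"
    then have "c * r powr (1 - real n) < 0" by (simp add: mult_neg_pos)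
    then show ?thesis using Aeq[OF \<open>r > 0\<close>] gpos[of "\<bar>c\<bar> * r powr (1 - real n)"]
      by (simp add: mult_pos_neg)
  qed
  show "c = 0 \<Longrightarrow> A r = 0" by (simp add: A_def Gfun_def)
qed

lemma Fi_props:
  fixes f fd dpc dpc' :: "real \<Rightarrow> real"
  assumes f_der: "\<And>x. x \<in> {0<..<1} \<Longrightarrow> (f has_real_derivative fd x) (at x)"
    and fd_cont: "continuous_on {0<..<1} fd"
    and f_pos: "\<And>x. x \<in> {0<..<1} \<Longrightarrow> f x > 0"
    and dpc_der: "\<And>x. x \<in> {0<..<1} \<Longrightarrow> (dpc has_real_derivative dpc' x) (at x)"
    and dpc'_cont: "continuous_on {0<..<1} dpc'"
    and dpc_pos: "\<And>x. x \<in> {0<..<1} \<Longrightarrow> dpc x > 0"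
  defines "Fd \<equiv> \<lambda>x. - (dpc' x * f x + dpc x * fd x) / (dpc x * f x)^2"
  shows Fi_der: "\<And>x. x \<in> {0<..<1} \<Longrightarrow> (Fi dpc f has_real_derivative Fd x) (at x)"
    and Fi_deriv: "\<And>x. x \<in> {0<..<1} \<Longrightarrow> deriv (Fi dpc f) x = Fd x"
    and Fi_cont: "continuous_on {0<..<1} (Fi dpc f)"
    and Fi_pos: "\<And>x. x \<in> {0<..<1} \<Longrightarrow> Fi dpc f x > 0"
    and Fi_lip: "\<And>p q. 0 < p \<Longrightarrow> q < 1 \<Longrightarrow> \<exists>L. \<forall>x\<in>{p..q}. \<forall>z\<in>{p..q}. \<bar>Fi dpc f x - Fi dpc f z\<bar> \<le> L * \<bar>x - z\<bar>"
proof -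
  have Fe: "Fi dpc f = (\<lambda>x. inverse (dpc x * f x))" by (rule ext) (simp add: Fi_def divide_inverse)
  show der: "(Fi dpc f has_real_derivative Fd x) (at x)" if x: "x \<in> {0<..<1}" for x
  proof -
    have nz: "dpc x * f x \<noteq> 0" using dpc_pos[OF x] f_pos[OF x] by simp
    have "((\<lambda>x. inverse (dpc x * f x)) has_real_derivative Fd x) (at x)"
      by (rule DERIV_cong[OF DERIV_inverse'[OF DERIV_mult[OF dpc_der[OF x] f_der[OF x]] nz]])
        (use nz in \<open>simp add: Fd_def field_simps power2_eq_square\<close>)
    then show ?thesis by (simp add: Fe)
  qed
  show "deriv (Fi dpc f) x = Fd x" if x: "x \<in> {0<..<1}" for x
    by (rule DERIV_imp_deriv[OF der[OF x]])
  show Fc: "continuous_on {0<..<1} (Fi dpc f)"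
    by (rule continuous_at_imp_continuous_on) (use der DERIV_isCont in blast)
  show "Fi dpc f x > 0" if x: "x \<in> {0<..<1}" for x
    using dpc_pos[OF x] f_pos[OF x] by (simp add: Fi_def)
  have fc: "continuous_on {0<..<1} f"
    by (rule continuous_at_imp_continuous_on) (use f_der DERIV_isCont in blast)
  have dc: "continuous_on {0<..<1} dpc"
    by (rule continuous_at_imp_continuous_on) (use dpc_der DERIV_isCont in blast)
  have Fdc: "continuous_on {0<..<1} Fd"
  proof -
    have nz: "(dpc x * f x)^2 \<noteq> 0" if "x \<in> {0<..<1}" for x
      using dpc_pos[OF that] f_pos[OF that] by simp
    show ?thesis unfolding Fd_def
      by (intro continuous_intros fc dc fd_cont dpc'_cont) (use nz in blast)
  qed
  fix p q :: real
  assume p: "0 < p" and q: "q < 1"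
  show "\<exists>L. \<forall>x\<in>{p..q}. \<forall>z\<in>{p..q}. \<bar>Fi dpc f x - Fi dpc f z\<bar> \<le> L * \<bar>x - z\<bar>"
  proof -
    have sub: "{p..q} \<subseteq> {0<..<1}" using p q by auto
    have "bounded (Fd ` {p..q})"
      by (intro compact_imp_bounded compact_continuous_image continuous_on_subset[OF Fdc sub] compact_Icc)
    then obtain B where B: "\<And>x. x \<in> {p..q} \<Longrightarrow> \<bar>Fd x\<bar> \<le> B" 
    proof -
      obtain B where B0: "\<forall>y\<in>Fd ` {p..q}. norm y \<le> B" using \<open>bounded (Fd ` {p..q})\<close> unfolding bounded_iff by blast
      have "\<And>x. x \<in> {p..q} \<Longrightarrow> \<bar>Fd x\<bar> \<le> B" using B0 by auto
      then show ?thesis by (rule that)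
    qed
    have mv: "\<bar>Fi dpc f z - Fi dpc f x\<bar> \<le> B * \<bar>x - z\<bar>" if "x \<in> {p..q}" "z \<in> {p..q}" "x < z" for x z
    proof -
      have dd: "(Fi dpc f has_real_derivative Fd y) (at y)" if "x \<le> y" "y \<le> z" for y
        by (rule der) (use p q \<open>x \<in> {p..q}\<close> \<open>z \<in> {p..q}\<close> that in auto)
      obtain \<xi> where \<xi>: "x < \<xi>" "\<xi> < z" "Fi dpc f z - Fi dpc f x = (z - x) * Fd \<xi>"
        using MVT2[OF \<open>x < z\<close> dd] by blast
      have "\<xi> \<in> {p..q}" using \<xi> that by auto
      then have "\<bar>Fd \<xi>\<bar> \<le> B" by (rule B)
      then show ?thesis using \<xi> that by (simp add: abs_mult mult.commute mult_right_mono)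
    qed
    have "\<forall>x\<in>{p..q}. \<forall>z\<in>{p..q}. \<bar>Fi dpc f x - Fi dpc f z\<bar> \<le> B * \<bar>x - z\<bar>"
    proof (intro ballI)
      fix x z assume xz: "x \<in> {p..q}" "z \<in> {p..q}"
      consider "x < z" | "x = z" | "z < x" by linarith
      then show "\<bar>Fi dpc f x - Fi dpc f z\<bar> \<le> B * \<bar>x - z\<bar>"
      proof cases
        case 1 then show ?thesis using mv[OF xz 1] by (simp add: abs_minus_commute)
      next
        case 2 then show ?thesis by simp
      next
        case 3 then show ?thesis using mv[OF xz(2,1) 3] by (simp add: abs_minus_commute)
      qed
    qed
    then show ?thesis by blast
  qed
qed

lemma lin0:
  fixes F Fd :: "real \<Rightarrow> real"
  assumes der: "\<And>x. x \<in> {0<..<1} \<Longrightarrow> (F has_real_derivative Fd x) (at x)"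
    and lim: "(F \<longlongrightarrow> 0) (at_right 0)"
    and ls: "Limsup (at_right 0) (\<lambda>S. ereal (deriv F S)) < \<infinity>"
  shows "\<exists>K s. 0 < s \<and> s < 1 \<and> (\<forall>S. 0 < S \<and> S \<le> s \<longrightarrow> F S \<le> K * S)"
proof -
  obtain m :: nat where m: "Limsup (at_right 0) (\<lambda>S. ereal (deriv F S)) < ereal (real m)"
    using ls less_PInf_Ex_of_nat by auto
  have "eventually (\<lambda>S. ereal (deriv F S) < ereal (real m)) (at_right 0)"
    by (rule Limsup_lessD[OF m])
  then obtain b where b: "b > 0" "\<And>S. 0 < S \<Longrightarrow> S < b \<Longrightarrow> deriv F S < real m"
    unfolding eventually_at_right_field by auto
  define s where "s = min (b/2) (1/2)"
  have s: "0 < s" "s < 1" "s < b" using b by (auto simp: s_def)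
  have "F S \<le> real m * S" if S: "0 < S" "S \<le> s" for S
  proof -
    have ev: "eventually (\<lambda>e. F S - real m * S \<le> F e) (at_right 0)"
      unfolding eventually_at_right_field
    proof (intro exI conjI allI impI)
      show "0 < S" by (rule S(1))
      fix e assume e: "0 < e" "e < S"
      have dd: "(F has_real_derivative Fd y) (at y)" if "e \<le> y" "y \<le> S" for y
        by (rule der) (use s S e that in auto)
      obtain z where z: "e < z" "z < S" "F S - F e = (S - e) * Fd z"
        using MVT2[OF e(2) dd] by blast
      have z01: "z \<in> {0<..<1}" using z e S s by auto
      have "Fd z = deriv F z" using DERIV_imp_deriv[OF der[OF z01]] by simp
      also have "\<dots> < real m" using b(2)[of z] z e S s by auto
      finally have "(S - e) * Fd z \<le> (S - e) * real m" using e by (intro mult_left_mono) auto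
      also have "\<dots> \<le> S * real m" using e by (intro mult_right_mono) auto
      finally show "F S - real m * S \<le> F e" using z(3) by (simp add: mult.commute)
    qed
    have "F S - real m * S \<le> 0"
      by (rule tendsto_lowerbound[OF lim ev]) simp
    then show ?thesis by simp
  qed
  then show ?thesis using s by blast
qed

lemma lin1:
  fixes F Fd :: "real \<Rightarrow> real"
  assumes der: "\<And>x. x \<in> {0<..<1} \<Longrightarrow> (F has_real_derivative Fd x) (at x)"
    and lim: "(F \<longlongrightarrow> 0) (at_left 1)"
    and li: "Liminf (at_left 1) (\<lambda>S. ereal (deriv F S)) > -\<infinity>"
  shows "\<exists>K s. 0 < s \<and> s < 1 \<and> (\<forall>S. s \<le> S \<and> S < 1 \<longrightarrow> F S \<le> K * (1 - S))"
proof -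
  obtain m :: nat where m: "ereal (- real m) < Liminf (at_left 1) (\<lambda>S. ereal (deriv F S))"
  proof (cases "Liminf (at_left 1) (\<lambda>S. ereal (deriv F S))")
    case (real r)
    obtain m :: nat where "- r < real m" using reals_Archimedean2 by blast
    then show ?thesis using that[of m] real by auto
  next
    case PInf
    then show ?thesis using that[of 0] by auto
  next
    case MInf
    then show ?thesis using li by auto
  qed
  have "eventually (\<lambda>S. ereal (deriv F S) > ereal (- real m)) (at_left 1)"
    by (rule less_LiminfD[OF m])
  then obtain b where b: "b < 1" "\<And>S. b < S \<Longrightarrow> S < 1 \<Longrightarrow> deriv F S > - real m"
    unfolding eventually_at_left_field by auto
  define s where "s = max ((b+1)/2) (1/2)"
  have s: "0 < s" "s < 1" "s > b" using b unfolding s_def by (auto simp: less_max_iff_disj max_less_iff_conj)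
  have "F S \<le> real m * (1 - S)" if S: "s \<le> S" "S < 1" for S
  proof -
    have ev: "eventually (\<lambda>e. F S - real m * (1 - S) \<le> F e) (at_left 1)"
      unfolding eventually_at_left_field
    proof (intro exI conjI allI impI)
      show "S < 1" by (rule S(2))
      fix e assume e: "S < e" "e < 1"
      have dd: "(F has_real_derivative Fd y) (at y)" if "S \<le> y" "y \<le> e" for y
        by (rule der) (use s S e that in auto)
      obtain z where z: "S < z" "z < e" "F e - F S = (e - S) * Fd z"
        using MVT2[OF e(1) dd] by blast
      have z01: "z \<in> {0<..<1}" using z e S s by auto
      have "Fd z = deriv F z" using DERIV_imp_deriv[OF der[OF z01]] by simp
      also have "\<dots> > - real m" using b(2)[of z] z e S s by auto
      finally have "(e - S) * (- real m) \<le> (e - S) * Fd z" using e by (intro mult_left_mono) auto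
      moreover have "(1 - S) * (- real m) \<le> (e - S) * (- real m)" using e by (intro mult_right_mono_neg) auto
      ultimately show "F S - real m * (1 - S) \<le> F e" using z(3) by (simp add: algebra_simps)
    qed
    have "F S - real m * (1 - S) \<le> 0"
      by (rule tendsto_lowerbound[OF lim ev]) simp
    then show ?thesis by simp
  qed
  then show ?thesis using s by blast
qed

lemma dom0:
  fixes f g dpc :: "real \<Rightarrow> real" and M :: real
  assumes fc: "continuous_on {0..1} f" and gc: "continuous_on {0..1} g"
    and f0: "f 0 = 0" and g0: "g 0 > 0"
    and fpos: "\<And>x. x \<in> {0<..<1} \<Longrightarrow> f x > 0" and gpos: "\<And>x. x \<in> {0<..<1} \<Longrightarrow> g x > 0"
    and dpc_pos: "\<And>x. x \<in> {0<..<1} \<Longrightarrow> dpc x > 0"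
  shows "\<exists>s. 0 < s \<and> s < 1 \<and> (\<forall>S. 0 < S \<and> S \<le> s \<longrightarrow> M * Fi dpc g S \<le> Fi dpc f S)"
proof -
  have "((\<lambda>x. M * f x - g x) \<longlongrightarrow> M * f 0 - g 0) (at_right 0)"
    by (intro tendsto_intros continuous_on_Icc_at_rightD[OF fc] continuous_on_Icc_at_rightD[OF gc]) simp_all
  then have "eventually (\<lambda>x. M * f x - g x < 0) (at_right 0)"
    using f0 g0 by (intro order_tendstoD) auto
  then obtain b where b: "b > 0" "\<And>S. 0 < S \<Longrightarrow> S < b \<Longrightarrow> M * f S - g S < 0"
    unfolding eventually_at_right_field by auto
  define s where "s = min (b/2) (1/2)"
  have s: "0 < s" "s < 1" "s < b" using b by (auto simp: s_def)
  have "M * Fi dpc g S \<le> Fi dpc f S" if S: "0 < S" "S \<le> s" for S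
  proof -
    have S01: "S \<in> {0<..<1}" using S s by auto
    have fp: "f S > 0" "g S > 0" "dpc S > 0" using fpos[OF S01] gpos[OF S01] dpc_pos[OF S01] by auto
    have "M * f S \<le> g S" using b(2)[of S] S s by auto
    then show ?thesis using fp by (simp add: Fi_def field_simps)
  qed
  then show ?thesis using s by blast
qed

lemma dom1:
  fixes f g dpc :: "real \<Rightarrow> real" and M :: real
  assumes fc: "continuous_on {0..1} f" and gc: "continuous_on {0..1} g"
    and f1: "f 1 = 0" and g1: "g 1 > 0"
    and fpos: "\<And>x. x \<in> {0<..<1} \<Longrightarrow> f x > 0" and gpos: "\<And>x. x \<in> {0<..<1} \<Longrightarrow> g x > 0"
    and dpc_pos: "\<And>x. x \<in> {0<..<1} \<Longrightarrow> dpc x > 0"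
  shows "\<exists>s. 0 < s \<and> s < 1 \<and> (\<forall>S. s \<le> S \<and> S < 1 \<longrightarrow> M * Fi dpc g S \<le> Fi dpc f S)"
proof -
  have "((\<lambda>x. M * f x - g x) \<longlongrightarrow> M * f 1 - g 1) (at_left 1)"
    by (intro tendsto_intros continuous_on_Icc_at_leftD[OF fc] continuous_on_Icc_at_leftD[OF gc]) simp_all
  then have "eventually (\<lambda>x. M * f x - g x < 0) (at_left 1)"
    using f1 g1 by (intro order_tendstoD) auto
  then obtain b where b: "b < 1" "\<And>S. b < S \<Longrightarrow> S < 1 \<Longrightarrow> M * f S - g S < 0"
    unfolding eventually_at_left_field by auto
  define s where "s = max ((b+1)/2) (1/2)"
  have s: "0 < s" "s < 1" "s > b" using b unfolding s_def by (auto simp: less_max_iff_disj max_less_iff_conj)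
  have "M * Fi dpc g S \<le> Fi dpc f S" if S: "s \<le> S" "S < 1" for S
  proof -
    have S01: "S \<in> {0<..<1}" using S s by auto
    have fp: "f S > 0" "g S > 0" "dpc S > 0" using fpos[OF S01] gpos[OF S01] dpc_pos[OF S01] by auto
    have "M * f S \<le> g S" using b(2)[of S] S s by auto
    then show ?thesis using fp by (simp add: Fi_def field_simps)
  qed
  then show ?thesis using s by blast
qed



lemma mvt_inc:
  fixes f fd :: "real \<Rightarrow> real"
  assumes "a < b" "continuous_on {a..b} f"
    and "\<And>x. x \<in> {a<..<b} \<Longrightarrow> (f has_real_derivative fd x) (at x)"
    and "\<And>x. x \<in> {a<..<b} \<Longrightarrow> fd x > 0"
  shows "f a < f b"
proof -
  obtain l z where z: "a < z" "z < b" "(f has_real_derivative l) (at z)" "f b - f a = (b - a) * l"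
    using MVT[OF assms(1,2)] assms(3) real_differentiable_def by force
  have "l = fd z" using DERIV_unique[OF z(3) assms(3)] z by auto
  then have "l > 0" using assms(4) z by auto
  then show ?thesis using z(4) assms(1) by (smt (verit) mult_pos_pos)
qed

lemma mvt_dec:
  fixes f fd :: "real \<Rightarrow> real"
  assumes "a < b" "continuous_on {a..b} f"
    and "\<And>x. x \<in> {a<..<b} \<Longrightarrow> (f has_real_derivative fd x) (at x)"
    and "\<And>x. x \<in> {a<..<b} \<Longrightarrow> fd x < 0"
  shows "f b < f a"
proof -
  have "(\<lambda>x. - f x) a < (\<lambda>x. - f x) b"
    by (rule mvt_inc[OF assms(1), of _ "\<lambda>x. - fd x"])
      (use assms in \<open>auto intro: continuous_intros DERIV_minus\<close>)
  then show ?thesis by simp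
qed

lemma lowA: "0 \<le> x \<Longrightarrow> \<bar>a\<bar> \<le> K \<Longrightarrow> a * x \<ge> - K * x" for a x K :: real
  by (smt (verit, best) abs_le_iff mult_minus_left mult_right_mono)

lemma upA: "0 \<le> x \<Longrightarrow> \<bar>a\<bar> \<le> K \<Longrightarrow> a * x \<le> K * x" for a x K :: real
  by (smt (verit, best) abs_le_iff mult_right_mono)

theorem theorem2p2:
  fixes n N1 N2 :: nat
    and a1 a2 \<alpha>1 \<alpha>2 :: "nat \<Rightarrow> real"
    and f1 f2 f1' f2' pc dpc dpc' :: "real \<Rightarrow> real"
    and c1 c2 r0 s0 :: real
  assumes n: "n \<ge> 2"
    and g1: "admissible_g N1 a1 \<alpha>1" and g2: "admissible_g N2 a2 \<alpha>2"
    \<comment> \<open>Assumption A\<close>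
    and f1_cont: "continuous_on {0..1} f1" and f2_cont: "continuous_on {0..1} f2"
    and f1_der: "\<And>x. x \<in> {0<..<1} \<Longrightarrow> (f1 has_real_derivative f1' x) (at x)"
    and f2_der: "\<And>x. x \<in> {0<..<1} \<Longrightarrow> (f2 has_real_derivative f2' x) (at x)"
    and f1'_cont: "continuous_on {0<..<1} f1'" and f2'_cont: "continuous_on {0<..<1} f2'"
    and f1_0: "f1 0 = 0" and f2_1: "f2 1 = 0"
    and f1'_pos: "\<And>x. x \<in> {0<..<1} \<Longrightarrow> f1' x > 0"
    and f2'_neg: "\<And>x. x \<in> {0<..<1} \<Longrightarrow> f2' x < 0"
    \<comment> \<open>Assumption B (dpc = p_c', dpc' = p_c'')\<close>
    and pc_der: "\<And>x. x \<in> {0<..<1} \<Longrightarrow> (pc has_real_derivative dpc x) (at x)"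
    and dpc_der: "\<And>x. x \<in> {0<..<1} \<Longrightarrow> (dpc has_real_derivative dpc' x) (at x)"
    and dpc'_cont: "continuous_on {0<..<1} dpc'"
    and dpc_pos: "\<And>x. x \<in> {0<..<1} \<Longrightarrow> dpc x > 0"
    \<comment> \<open>Condition (P)\<close>
    and P1: "filterlim (\<lambda>S. dpc S * f1 S) at_top (at_right 0)"
    and P2: "filterlim (\<lambda>S. dpc S * f2 S) at_top (at_left 1)"
    and c: "c1\<^sup>2 + c2\<^sup>2 > 0"
    and r0: "r0 > 0" and s0: "0 < s0" "s0 < 1"
    and cases:
      "(c2 \<le> 0 \<and> 0 < c1 \<and> Limsup (at_right 0) (\<lambda>S. ereal (deriv (Fi dpc f1) S)) < \<infinity>)
     \<or> (c1 = 0 \<and> c2 < 0 \<and> Limsup (at_right 0) (\<lambda>S. ereal (deriv (Fi dpc f2) S)) < \<infinity>)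
     \<or> (c1 \<le> 0 \<and> 0 < c2 \<and> Liminf (at_left 1) (\<lambda>S. ereal (deriv (Fi dpc f2) S)) > -\<infinity>)
     \<or> (c2 = 0 \<and> c1 < 0 \<and> Liminf (at_left 1) (\<lambda>S. ereal (deriv (Fi dpc f1) S)) > -\<infinity>)
     \<or> (c1 > 0 \<and> c2 > 0 \<and> Limsup (at_right 0) (\<lambda>S. ereal (deriv (Fi dpc f1) S)) < \<infinity>
                        \<and> Liminf (at_left 1) (\<lambda>S. ereal (deriv (Fi dpc f2) S)) > -\<infinity>)
     \<or> (c1 < 0 \<and> c2 < 0)"
  shows "\<exists>S :: real \<Rightarrow> real. S r0 = s0 \<and> continuous_on {r0..} S
     \<and> (\<forall>r\<ge>r0. 0 < S r \<and> S r < 1)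
     \<and> (\<forall>r>r0. (S has_real_derivative
            Frhs n c1 c2 (Gfun N1 a1 \<alpha>1) (Gfun N2 a2 \<alpha>2) dpc f1 f2 r (S r)) (at r))"
proof -
  define A where "A = (\<lambda>r. Gfun N2 a2 \<alpha>2 (c2 * r powr (1 - real n)))"
  define B where "B = (\<lambda>r. Gfun N1 a1 \<alpha>1 (c1 * r powr (1 - real n)))"
  define F1 where "F1 = Fi dpc f1"
  define F2 where "F2 = Fi dpc f2"
  have Frhs_eq: "Frhs n c1 c2 (Gfun N1 a1 \<alpha>1) (Gfun N2 a2 \<alpha>2) dpc f1 f2 r S = A r * F2 S - B r * F1 S" for r S
    by (simp add: Frhs_def A_def B_def F1_def F2_def)
  have Ac: "continuous_on {r0..} A" using Aprops(1)[OF g2 r0 n, of c2] by (simp add: A_def)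
  have Bc: "continuous_on {r0..} B" using Aprops(1)[OF g1 r0 n, of c1] by (simp add: B_def)
  obtain KA where KA: "\<And>r. r \<ge> r0 \<Longrightarrow> \<bar>A r\<bar> \<le> KA" using Aprops(3)[OF g2 r0 n, of c2] by (auto simp: A_def)
  obtain KB where KB: "\<And>r. r \<ge> r0 \<Longrightarrow> \<bar>B r\<bar> \<le> KB" using Aprops(3)[OF g1 r0 n, of c1] by (auto simp: B_def)
  have KA0: "KA \<ge> 0" using KA[of r0] by simp
  have KB0: "KB \<ge> 0" using KB[of r0] by simp
  obtain MA where MA: "MA \<ge> 0" "\<And>r. r \<ge> r0 \<Longrightarrow> a2 0 * \<bar>c2\<bar> * r powr (1 - real n) \<le> \<bar>A r\<bar> \<and> \<bar>A r\<bar> \<le> MA * \<bar>c2\<bar> * r powr (1 - real n)"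
    using Aprops(2)[OF g2 r0 n, of c2] by (auto simp: A_def)
  obtain MB where MB: "MB \<ge> 0" "\<And>r. r \<ge> r0 \<Longrightarrow> a1 0 * \<bar>c1\<bar> * r powr (1 - real n) \<le> \<bar>B r\<bar> \<and> \<bar>B r\<bar> \<le> MB * \<bar>c1\<bar> * r powr (1 - real n)"
    using Aprops(2)[OF g1 r0 n, of c1] by (auto simp: B_def)
  have Apos: "r \<ge> r0 \<Longrightarrow> c2 > 0 \<Longrightarrow> A r > 0" for r using Aprops(4)[OF g2 r0 n, of r c2] r0 by (simp add: A_def)
  have Aneg: "r \<ge> r0 \<Longrightarrow> c2 < 0 \<Longrightarrow> A r < 0" for r using Aprops(5)[OF g2 r0 n, of r c2] r0 by (simp add: A_def)
  have Az: "c2 = 0 \<Longrightarrow> A r = 0" for r using Aprops(6)[OF g2 r0 n, of c2 r] by (simp add: A_def)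
  have Bpos: "r \<ge> r0 \<Longrightarrow> c1 > 0 \<Longrightarrow> B r > 0" for r using Aprops(4)[OF g1 r0 n, of r c1] r0 by (simp add: B_def)
  have Bneg: "r \<ge> r0 \<Longrightarrow> c1 < 0 \<Longrightarrow> B r < 0" for r using Aprops(5)[OF g1 r0 n, of r c1] r0 by (simp add: B_def)
  have Bz: "c1 = 0 \<Longrightarrow> B r = 0" for r using Aprops(6)[OF g1 r0 n, of c1 r] by (simp add: B_def)
  have a10: "a1 0 > 0" using g1 by (simp add: admissible_g_def)
  have a20: "a2 0 > 0" using g2 by (simp add: admissible_g_def)
  have f1c: "continuous_on {a..b} f1" if "0 \<le> a" "b \<le> 1" for a b by (rule continuous_on_subset[OF f1_cont]) (use that in auto)
  have f2c: "continuous_on {a..b} f2" if "0 \<le> a" "b \<le> 1" for a b by (rule continuous_on_subset[OF f2_cont]) (use that in auto)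
  have f1pos: "f1 x > 0" if x: "x \<in> {0<..<1}" for x
  proof -
    have "f1 0 < f1 x" by (rule mvt_inc[OF _ f1c, where fd=f1']) (use x f1_der f1'_pos in auto)
    then show ?thesis using f1_0 by simp
  qed
  have f2pos: "f2 x > 0" if x: "x \<in> {0<..<1}" for x
  proof -
    have "f2 1 < f2 x" by (rule mvt_dec[OF _ f2c, where fd=f2']) (use x f2_der f2'_neg in auto)
    then show ?thesis using f2_1 by simp
  qed
  have f11: "f1 1 > 0"
  proof -
    have "f1 0 < f1 1" by (rule mvt_inc[OF _ f1c, where fd=f1']) (use f1_der f1'_pos in auto)
    then show ?thesis using f1_0 by simp
  qed
  have f20: "f2 0 > 0"
  proof -
    have "f2 1 < f2 0" by (rule mvt_dec[OF _ f2c, where fd=f2']) (use f2_der f2'_neg in auto)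
    then show ?thesis using f2_1 by simp
  qed
  have FP1: "(\<forall>x. x \<in> {0<..<1} \<longrightarrow> (F1 has_real_derivative (- (dpc' x * f1 x + dpc x * f1' x) / (dpc x * f1 x)^2)) (at x))
     \<and> continuous_on {0<..<1} F1
     \<and> (\<forall>p q. 0 < p \<longrightarrow> q < 1 \<longrightarrow> (\<exists>L. \<forall>x\<in>{p..q}. \<forall>z\<in>{p..q}. \<bar>F1 x - F1 z\<bar> \<le> L * \<bar>x - z\<bar>))"
    unfolding F1_def
    using Fi_props(1,3,5)[where f=f1 and fd=f1' and dpc=dpc and dpc'=dpc', OF f1_der f1'_cont f1pos dpc_der dpc'_cont dpc_pos]
    by blast
  have FP2: "(\<forall>x. x \<in> {0<..<1} \<longrightarrow> (F2 has_real_derivative (- (dpc' x * f2 x + dpc x * f2' x) / (dpc x * f2 x)^2)) (at x))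
     \<and> continuous_on {0<..<1} F2
     \<and> (\<forall>p q. 0 < p \<longrightarrow> q < 1 \<longrightarrow> (\<exists>L. \<forall>x\<in>{p..q}. \<forall>z\<in>{p..q}. \<bar>F2 x - F2 z\<bar> \<le> L * \<bar>x - z\<bar>))"
    unfolding F2_def
    using Fi_props(1,3,5)[where f=f2 and fd=f2' and dpc=dpc and dpc'=dpc', OF f2_der f2'_cont f2pos dpc_der dpc'_cont dpc_pos]
    by blast
  have F1d: "\<And>x. x \<in> {0<..<1} \<Longrightarrow> (F1 has_real_derivative (- (dpc' x * f1 x + dpc x * f1' x) / (dpc x * f1 x)^2)) (at x)"
    using FP1 by blast
  have F2d: "\<And>x. x \<in> {0<..<1} \<Longrightarrow> (F2 has_real_derivative (- (dpc' x * f2 x + dpc x * f2' x) / (dpc x * f2 x)^2)) (at x)"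
    using FP2 by blast
  have F1p: "F1 S > 0" if "S \<in> {0<..<1}" for S using f1pos[OF that] dpc_pos[OF that] by (simp add: F1_def Fi_def)
  have F2p: "F2 S > 0" if "S \<in> {0<..<1}" for S using f2pos[OF that] dpc_pos[OF that] by (simp add: F2_def Fi_def)
  have F1inv: "F1 = (\<lambda>S. inverse (dpc S * f1 S))" by (rule ext) (simp add: F1_def Fi_def divide_inverse)
  have F2inv: "F2 = (\<lambda>S. inverse (dpc S * f2 S))" by (rule ext) (simp add: F2_def Fi_def divide_inverse)
  have F1lim0: "(F1 \<longlongrightarrow> 0) (at_right 0)" unfolding F1inv by (rule tendsto_inverse_0_at_top[OF P1])
  have F2lim1: "(F2 \<longlongrightarrow> 0) (at_left 1)" unfolding F2inv by (rule tendsto_inverse_0_at_top[OF P2])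
  have c1cases: "c1 > 0 \<Longrightarrow> Limsup (at_right 0) (\<lambda>S. ereal (deriv F1 S)) < \<infinity>"
    using cases unfolding F1_def by auto
  have c4cases: "c1 = 0 \<Longrightarrow> c2 < 0 \<Longrightarrow> Limsup (at_right 0) (\<lambda>S. ereal (deriv F2 S)) < \<infinity>"
    using cases unfolding F2_def by auto
  have c3cases: "c2 > 0 \<Longrightarrow> Liminf (at_left 1) (\<lambda>S. ereal (deriv F2 S)) > -\<infinity>"
    using cases unfolding F2_def by auto
  have c2cases: "c2 = 0 \<Longrightarrow> c1 < 0 \<Longrightarrow> Liminf (at_left 1) (\<lambda>S. ereal (deriv F1 S)) > -\<infinity>"
    using cases unfolding F1_def by auto
  have F2lim0: "(F2 \<longlongrightarrow> 0) (at_right 0)"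
  proof (rule tendsto_sandwich[OF _ _ tendsto_const F1lim0])
    obtain s' where s': "0 < s'" "s' < 1" "\<And>S. 0 < S \<Longrightarrow> S \<le> s' \<Longrightarrow> 1 * F2 S \<le> F1 S"
      using dom0[where f=f1 and g=f2 and dpc=dpc and M=1, OF f1_cont f2_cont f1_0 f20 f1pos f2pos dpc_pos] unfolding F1_def F2_def by blast
    show "eventually (\<lambda>S. 0 \<le> F2 S) (at_right 0)"
      unfolding eventually_at_right_field using F2p by (intro exI[of _ 1]) (auto intro: less_imp_le)
    show "eventually (\<lambda>S. F2 S \<le> F1 S) (at_right 0)"
      unfolding eventually_at_right_field using s' by (intro exI[of _ s']) auto
  qed
  have F1lim1: "(F1 \<longlongrightarrow> 0) (at_left 1)"
  proof (rule tendsto_sandwich[OF _ _ tendsto_const F2lim1])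
    obtain s' where s': "0 < s'" "s' < 1" "\<And>S. s' \<le> S \<Longrightarrow> S < 1 \<Longrightarrow> 1 * F1 S \<le> F2 S"
      using dom1[where f=f2 and g=f1 and dpc=dpc and M=1, OF f2_cont f1_cont f2_1 f11 f2pos f1pos dpc_pos] unfolding F1_def F2_def by blast
    show "eventually (\<lambda>S. 0 \<le> F1 S) (at_left 1)"
      unfolding eventually_at_left_field using F1p by (intro exI[of _ 0]) (auto intro: less_imp_le)
    show "eventually (\<lambda>S. F1 S \<le> F2 S) (at_left 1)"
      unfolding eventually_at_left_field using s' by (intro exI[of _ s']) auto
  qed
  have ppos: "r powr (1 - real n) > 0" if "r \<ge> r0" for r using that r0 by simp
  have lowbd: "\<exists>C sl. C > 0 \<and> 0 < sl \<and> (\<forall>r S. r \<ge> r0 \<longrightarrow> 0 < S \<longrightarrow> S \<le> sl \<longrightarrow> A r * F2 S - B r * F1 S \<ge> -C*S)"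
  proof -
    consider "c1 \<le> 0 \<and> c2 \<ge> 0" | "c1 > 0" | "c1 = 0 \<and> c2 < 0" | "c1 < 0 \<and> c2 < 0" by linarith
    then show ?thesis
    proof cases
      case 1
      have "A r * F2 S - B r * F1 S \<ge> -1*S" if "r \<ge> r0" "0 < S" "S \<le> 1/2" for r S
      proof -
        have S: "S \<in> {0<..<1}" using that by auto
        have "A r \<ge> 0" using 1 Apos[OF that(1)] Az[of r] by force
        moreover have "B r \<le> 0" using 1 Bneg[OF that(1)] Bz[of r] by force
        ultimately have "A r * F2 S \<ge> 0" "B r * F1 S \<le> 0" using F1p[OF S] F2p[OF S]
          by (simp_all add: mult_nonneg_nonneg mult_nonpos_nonneg)
        then have "A r * F2 S - B r * F1 S \<ge> 0" by linarith
        then show ?thesis using that by simp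
      qed
      then show ?thesis by (intro exI[of _ 1] exI[of _ "1/2"]) auto
    next
      case 2
      obtain K s where Ks: "0 < s" "s < 1" "\<And>S. 0 < S \<Longrightarrow> S \<le> s \<Longrightarrow> F1 S \<le> K * S"
        using lin0[where F=F1, OF F1d F1lim0 c1cases[OF 2]] by blast
      define K' where "K' = max K 1"
      have K': "F1 S \<le> K' * S" if "0 < S" "S \<le> s" for S
      proof -
        have "K * S \<le> K' * S" using that by (intro mult_right_mono) (auto simp: K'_def)
        then show ?thesis using Ks(3)[OF that] by linarith
      qed
      have K'0: "K' > 0" by (simp add: K'_def)
      obtain s' where s': "0 < s'" "s' < 1" "\<And>S. 0 < S \<Longrightarrow> S \<le> s' \<Longrightarrow> 1 * F2 S \<le> F1 S"
        using dom0[where f=f1 and g=f2 and dpc=dpc and M=1, OF f1_cont f2_cont f1_0 f20 f1pos f2pos dpc_pos] unfolding F1_def F2_def by blast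
      have "A r * F2 S - B r * F1 S \<ge> -((KA + KB) * K' + 1)*S" if r: "r \<ge> r0" and S: "0 < S" "S \<le> min s s'" for r S
      proof -
        have S01: "S \<in> {0<..<1}" using S Ks by auto
        have F1le: "F1 S \<le> K' * S" using K' S by auto
        have F2le: "F2 S \<le> F1 S" using s'(3)[of S] S by auto
        have "A r * F2 S \<ge> - KA * F1 S"
        proof (cases "c2 \<ge> 0")
          case True
          then have "A r \<ge> 0" using Apos[OF r] Az[of r] by force
          then have "A r * F2 S \<ge> 0" using F2p[OF S01] by simp
          moreover have "KA * F1 S \<ge> 0" using KA0 F1p[OF S01] by simp
          ultimately show ?thesis by linarith
        next
          case False
          have "A r * F2 S \<ge> - KA * F2 S" by (rule lowA) (use F2p[OF S01] KA[OF r] in auto)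
          moreover have "KA * F2 S \<le> KA * F1 S" using F2le KA0 by (intro mult_left_mono)
          ultimately show ?thesis by linarith
        qed
        moreover have "B r * F1 S \<le> KB * F1 S" by (rule upA) (use F1p[OF S01] KB[OF r] in auto)
        ultimately have "A r * F2 S - B r * F1 S \<ge> - (KA + KB) * F1 S" by (simp add: algebra_simps)
        moreover have "(KA + KB) * F1 S \<le> (KA + KB) * (K' * S)" using F1le KA0 KB0 by (intro mult_left_mono) auto
        ultimately show ?thesis using S by (simp add: algebra_simps)
      qed
      moreover have "(KA + KB) * K' + 1 > 0" using KA0 KB0 K'0 by (simp add: add_nonneg_pos)
      ultimately show ?thesis using Ks s' by (intro exI[of _ "(KA + KB) * K' + 1"] exI[of _ "min s s'"]) auto
    next
      case 3
      obtain K s where Ks: "0 < s" "s < 1" "\<And>S. 0 < S \<Longrightarrow> S \<le> s \<Longrightarrow> F2 S \<le> K * S"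
        using lin0[where F=F2, OF F2d F2lim0 c4cases] 3 by blast
      define K' where "K' = max K 1"
      have K': "F2 S \<le> K' * S" if "0 < S" "S \<le> s" for S
      proof -
        have "K * S \<le> K' * S" using that by (intro mult_right_mono) (auto simp: K'_def)
        then show ?thesis using Ks(3)[OF that] by linarith
      qed
      have K'0: "K' > 0" by (simp add: K'_def)
      have "A r * F2 S - B r * F1 S \<ge> -(KA * K' + 1)*S" if r: "r \<ge> r0" and S: "0 < S" "S \<le> s" for r S
      proof -
        have S01: "S \<in> {0<..<1}" using S Ks by auto
        have "A r * F2 S \<ge> - KA * F2 S" by (rule lowA) (use F2p[OF S01] KA[OF r] in auto)
        moreover have "KA * F2 S \<le> KA * (K' * S)" using K'[OF S] KA0 by (intro mult_left_mono)
        moreover have "B r * F1 S = 0" using Bz 3 by simp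
        moreover have "-(KA * K' + 1)*S = - (KA * (K' * S)) - S" by (simp add: algebra_simps)
        moreover have "- KA * F2 S = - (KA * F2 S)" by simp
        ultimately show ?thesis using S by linarith
      qed
      moreover have "KA * K' + 1 > 0" using KA0 K'0 by (simp add: add_nonneg_pos)
      ultimately show ?thesis using Ks by (intro exI[of _ "KA * K' + 1"] exI[of _ s]) auto
    next
      case 4
      define M where "M = MA * \<bar>c2\<bar> / (a1 0 * \<bar>c1\<bar>)"
      have M0: "M \<ge> 0" using MA(1) a10 by (simp add: M_def)
      obtain s' where s': "0 < s'" "s' < 1" "\<And>S. 0 < S \<Longrightarrow> S \<le> s' \<Longrightarrow> M * F2 S \<le> F1 S"
        using dom0[where f=f1 and g=f2 and dpc=dpc and M=M, OF f1_cont f2_cont f1_0 f20 f1pos f2pos dpc_pos] unfolding F1_def F2_def by blast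
      have AB: "\<bar>A r\<bar> \<le> M * \<bar>B r\<bar>" if r: "r \<ge> r0" for r
      proof -
        have "\<bar>A r\<bar> \<le> MA * \<bar>c2\<bar> * r powr (1 - real n)" using MA(2)[OF r] by simp
        also have "\<dots> = M * (a1 0 * \<bar>c1\<bar> * r powr (1 - real n))" using 4 a10 by (simp add: M_def)
        also have "\<dots> \<le> M * \<bar>B r\<bar>" using MB(2)[OF r] M0 by (intro mult_left_mono) auto
        finally show ?thesis .
      qed
      have "A r * F2 S - B r * F1 S \<ge> -1*S" if r: "r \<ge> r0" and S: "0 < S" "S \<le> s'" for r S
      proof -
        have S01: "S \<in> {0<..<1}" using S s' by auto
        have An: "A r < 0" "B r < 0" using Aneg[OF r] Bneg[OF r] 4 by auto
        have e1: "A r * F2 S - B r * F1 S = \<bar>B r\<bar> * F1 S - \<bar>A r\<bar> * F2 S" using An by simp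
        have "\<bar>A r\<bar> * F2 S \<le> (M * \<bar>B r\<bar>) * F2 S" using AB[OF r] F2p[OF S01] by (intro mult_right_mono) auto
        then have e2: "\<bar>A r\<bar> * F2 S \<le> \<bar>B r\<bar> * (M * F2 S)" by (simp add: mult_ac)
        have e3: "\<bar>B r\<bar> * (M * F2 S) \<le> \<bar>B r\<bar> * F1 S" using s'(3)[OF S] by (intro mult_left_mono) auto
        show ?thesis using e1 e2 e3 S by simp
      qed
      then show ?thesis using s' by (intro exI[of _ 1] exI[of _ s']) auto
    qed
  qed
  have upbd: "\<exists>C eu. C > 0 \<and> 0 < eu \<and> (\<forall>r S. r \<ge> r0 \<longrightarrow> 1 - eu \<le> S \<longrightarrow> S < 1 \<longrightarrow> A r * F2 S - B r * F1 S \<le> C*(1-S))"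
  proof -
    consider "c2 \<le> 0 \<and> c1 \<ge> 0" | "c2 > 0" | "c2 = 0 \<and> c1 < 0" | "c2 < 0 \<and> c1 < 0" by linarith
    then show ?thesis
    proof cases
      case 1
      have "A r * F2 S - B r * F1 S \<le> 1*(1-S)" if "r \<ge> r0" "1 - 1/2 \<le> S" "S < 1" for r S
      proof -
        have S: "S \<in> {0<..<1}" using that by auto
        have "A r \<le> 0" using 1 Aneg[OF that(1)] Az[of r] by force
        moreover have "B r \<ge> 0" using 1 Bpos[OF that(1)] Bz[of r] by force
        ultimately have "A r * F2 S \<le> 0" "B r * F1 S \<ge> 0" using F1p[OF S] F2p[OF S]
          by (simp_all add: mult_nonpos_nonneg mult_nonneg_nonneg)
        then show ?thesis using that by simp
      qed
      then show ?thesis by (intro exI[of _ 1] exI[of _ "1/2"]) auto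
    next
      case 2
      obtain K s where Ks: "0 < s" "s < 1" "\<And>S. s \<le> S \<Longrightarrow> S < 1 \<Longrightarrow> F2 S \<le> K * (1 - S)"
        using lin1[where F=F2, OF F2d F2lim1 c3cases[OF 2]] by blast
      define K' where "K' = max K 1"
      have K': "F2 S \<le> K' * (1 - S)" if "s \<le> S" "S < 1" for S
      proof -
        have "K * (1 - S) \<le> K' * (1 - S)" using that by (intro mult_right_mono) (auto simp: K'_def)
        then show ?thesis using Ks(3)[OF that] by linarith
      qed
      have K'0: "K' > 0" by (simp add: K'_def)
      obtain s' where s': "0 < s'" "s' < 1" "\<And>S. s' \<le> S \<Longrightarrow> S < 1 \<Longrightarrow> 1 * F1 S \<le> F2 S"
        using dom1[where f=f2 and g=f1 and dpc=dpc and M=1, OF f2_cont f1_cont f2_1 f11 f2pos f1pos dpc_pos] unfolding F1_def F2_def by blast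
      have "A r * F2 S - B r * F1 S \<le> ((KA + KB) * K' + 1) * (1 - S)" if r: "r \<ge> r0" and S: "1 - (1 - max s s') \<le> S" "S < 1" for r S
      proof -
        have S01: "S \<in> {0<..<1}" using S Ks s' by auto
        have F2le: "F2 S \<le> K' * (1 - S)" using K' S by auto
        have F1le: "F1 S \<le> F2 S" using s'(3)[of S] S by auto
        have "A r * F2 S \<le> KA * F2 S" by (rule upA) (use F2p[OF S01] KA[OF r] in auto)
        moreover have "B r * F1 S \<ge> - KB * F1 S" by (rule lowA) (use F1p[OF S01] KB[OF r] in auto)
        moreover have "KB * F1 S \<le> KB * F2 S" using F1le KB0 by (intro mult_left_mono)
        moreover have "(KA + KB) * F2 S \<le> (KA + KB) * (K' * (1 - S))" using F2le KA0 KB0 by (intro mult_left_mono) auto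
        moreover have "((KA + KB) * K' + 1) * (1 - S) = (KA + KB) * (K' * (1 - S)) + (1 - S)" by (simp add: algebra_simps)
        moreover have "(KA + KB) * F2 S = KA * F2 S + KB * F2 S" by (simp add: algebra_simps)
        moreover have "- KB * F1 S = - (KB * F1 S)" by simp
        ultimately show ?thesis using S by linarith
      qed
      moreover have "(KA + KB) * K' + 1 > 0" using KA0 KB0 K'0 by (simp add: add_nonneg_pos)
      moreover have "0 < 1 - max s s'" using Ks s' by auto
      ultimately show ?thesis by (intro exI[of _ "(KA + KB) * K' + 1"] exI[of _ "1 - max s s'"]) auto
    next
      case 3
      obtain K s where Ks: "0 < s" "s < 1" "\<And>S. s \<le> S \<Longrightarrow> S < 1 \<Longrightarrow> F1 S \<le> K * (1 - S)"
        using lin1[where F=F1, OF F1d F1lim1 c2cases] 3 by blast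
      define K' where "K' = max K 1"
      have K': "F1 S \<le> K' * (1 - S)" if "s \<le> S" "S < 1" for S
      proof -
        have "K * (1 - S) \<le> K' * (1 - S)" using that by (intro mult_right_mono) (auto simp: K'_def)
        then show ?thesis using Ks(3)[OF that] by linarith
      qed
      have K'0: "K' > 0" by (simp add: K'_def)
      have "A r * F2 S - B r * F1 S \<le> (KB * K' + 1) * (1 - S)" if r: "r \<ge> r0" and S: "1 - (1 - s) \<le> S" "S < 1" for r S
      proof -
        have S01: "S \<in> {0<..<1}" using S Ks by auto
        have "B r * F1 S \<ge> - KB * F1 S" by (rule lowA) (use F1p[OF S01] KB[OF r] in auto)
        moreover have "KB * F1 S \<le> KB * (K' * (1 - S))" using K'[of S] S KB0 by (intro mult_left_mono) auto
        moreover have "A r * F2 S = 0" using Az 3 by simp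
        moreover have "(KB * K' + 1) * (1 - S) = KB * (K' * (1 - S)) + (1 - S)" by (simp add: algebra_simps)
        moreover have "- KB * F1 S = - (KB * F1 S)" by simp
        ultimately show ?thesis using S by linarith
      qed
      moreover have "KB * K' + 1 > 0" using KB0 K'0 by (simp add: add_nonneg_pos)
      ultimately show ?thesis using Ks by (intro exI[of _ "KB * K' + 1"] exI[of _ "1 - s"]) auto
    next
      case 4
      define M where "M = MB * \<bar>c1\<bar> / (a2 0 * \<bar>c2\<bar>)"
      have M0: "M \<ge> 0" using MB(1) a20 by (simp add: M_def)
      obtain s' where s': "0 < s'" "s' < 1" "\<And>S. s' \<le> S \<Longrightarrow> S < 1 \<Longrightarrow> M * F1 S \<le> F2 S"
        using dom1[where f=f2 and g=f1 and dpc=dpc and M=M, OF f2_cont f1_cont f2_1 f11 f2pos f1pos dpc_pos] unfolding F1_def F2_def by blast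
      have BA: "\<bar>B r\<bar> \<le> M * \<bar>A r\<bar>" if r: "r \<ge> r0" for r
      proof -
        have "\<bar>B r\<bar> \<le> MB * \<bar>c1\<bar> * r powr (1 - real n)" using MB(2)[OF r] by simp
        also have "\<dots> = M * (a2 0 * \<bar>c2\<bar> * r powr (1 - real n))" using 4 a20 by (simp add: M_def)
        also have "\<dots> \<le> M * \<bar>A r\<bar>" using MA(2)[OF r] M0 by (intro mult_left_mono) auto
        finally show ?thesis .
      qed
      have "A r * F2 S - B r * F1 S \<le> 1 * (1 - S)" if r: "r \<ge> r0" and S: "1 - (1 - s') \<le> S" "S < 1" for r S
      proof -
        have S01: "S \<in> {0<..<1}" using S s' by auto
        have An: "A r < 0" "B r < 0" using Aneg[OF r] Bneg[OF r] 4 by auto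
        have e1: "A r * F2 S - B r * F1 S = \<bar>B r\<bar> * F1 S - \<bar>A r\<bar> * F2 S" using An by simp
        have "\<bar>B r\<bar> * F1 S \<le> (M * \<bar>A r\<bar>) * F1 S" using BA[OF r] F1p[OF S01] by (intro mult_right_mono) auto
        then have e2: "\<bar>B r\<bar> * F1 S \<le> \<bar>A r\<bar> * (M * F1 S)" by (simp add: mult_ac)
        have e3: "\<bar>A r\<bar> * (M * F1 S) \<le> \<bar>A r\<bar> * F2 S" using s'(3)[of S] S by (intro mult_left_mono) auto
        show ?thesis using e1 e2 e3 S by simp
      qed
      then show ?thesis using s' by (intro exI[of _ 1] exI[of _ "1 - s'"]) auto
    qed
  qed
  obtain C1 sl where C1: "C1 > 0" "0 < sl" "\<And>r S. r \<ge> r0 \<Longrightarrow> 0 < S \<Longrightarrow> S \<le> sl \<Longrightarrow> A r * F2 S - B r * F1 S \<ge> -C1*S"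
    using lowbd by blast
  obtain C2 eu where C2: "C2 > 0" "0 < eu" "\<And>r S. r \<ge> r0 \<Longrightarrow> 1 - eu \<le> S \<Longrightarrow> S < 1 \<Longrightarrow> A r * F2 S - B r * F1 S \<le> C2*(1-S)"
    using upbd by blast
  define C where "C = max C1 C2"
  have "\<exists>Y. Y r0 = s0 \<and> continuous_on {r0..} Y \<and> (\<forall>r\<ge>r0. 0 < Y r \<and> Y r < 1)
     \<and> (\<forall>r>r0. (Y has_real_derivative A r * F2 (Y r) - B r * F1 (Y r)) (at r))"
  proof (rule abstract_main[where A=A and B=B and Fa=F1 and Fb=F2 and KA=KA and KB=KB and C=C and sl=sl and eu=eu])
    show "continuous_on {r0..} A" by (rule Ac)
    show "continuous_on {r0..} B" by (rule Bc)
    show "\<And>r. r0 \<le> r \<Longrightarrow> \<bar>A r\<bar> \<le> KA" by (rule KA)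
    show "\<And>r. r0 \<le> r \<Longrightarrow> \<bar>B r\<bar> \<le> KB" by (rule KB)
    show "continuous_on {0<..<1} F1" using FP1 by blast
    show "continuous_on {0<..<1} F2" using FP2 by blast
    show "\<And>p q. 0 < p \<Longrightarrow> q < 1 \<Longrightarrow> \<exists>L. \<forall>x\<in>{p..q}. \<forall>z\<in>{p..q}. \<bar>F1 x - F1 z\<bar> \<le> L * \<bar>x - z\<bar>" using FP1 by blast
    show "\<And>p q. 0 < p \<Longrightarrow> q < 1 \<Longrightarrow> \<exists>L. \<forall>x\<in>{p..q}. \<forall>z\<in>{p..q}. \<bar>F2 x - F2 z\<bar> \<le> L * \<bar>x - z\<bar>" using FP2 by blast
    show "0 < s0" "s0 < 1" by (rule s0(1), rule s0(2))
    show "0 < C" using C1 by (simp add: C_def)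
    show "0 < sl" "0 < eu" by (rule C1(2), rule C2(2))
    show "- C * S \<le> A r * F2 S - B r * F1 S" if "r0 \<le> r" "0 < S" "S \<le> sl" for r S
    proof -
      have "C1 * S \<le> C * S" using that by (intro mult_right_mono) (auto simp: C_def)
      then show ?thesis using C1(3)[OF that] by linarith
    qed
    show "A r * F2 S - B r * F1 S \<le> C * (1 - S)" if "r0 \<le> r" "1 - eu \<le> S" "S < 1" for r S
    proof -
      have "C2 * (1 - S) \<le> C * (1 - S)" using that by (intro mult_right_mono) (auto simp: C_def)
      then show ?thesis using C2(3)[OF that] by linarith
    qed
  qed
  then show ?thesis unfolding Frhs_eq by blast
qed


end
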